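(* Let $p$ be an odd prime, $\alpha$ an indeterminate over $\mathbb F_p$, and $G^{(\alpha)}(X)=-\sum_{k=1}^{p-1}\frac{1}{k}\frac{X^{k}}{\prod_{s=1}^{k-1}b_{1,s}(\alpha)}\in\mathbb F_p(\alpha)[X]$ (empty product equal to $1$). Then \[ L_{p-1}^{(\alpha)}\bigl(G^{(\alpha)}(X)\bigr)\equiv X\pmod{X^p-L_{p-1}^{(\alpha^p)}(\alpha^p-\alpha)} \] in the polynomial ring $\mathbb F_p(\alpha)[X]$, where $L_{p-1}^{(\alpha^p)}(\alpha^p-\alpha)$ denotes the element of $\mathbb F_p[\alpha]$ obtained from $L_{p-1}^{(\alpha)}(X)$ by substituting $\alpha^p$ for $\alpha$ and $\alpha^p-\alpha$ for $X$.
   Context: $\mathbb F_p$ is the field of $p$ elements. $L_{p-1}^{(\alpha)}(X)\in\mathbb F_p[\alpha,X]$ is defined by $L_{p-1}^{(\alpha)}(X)=\sum_{k=0}^{p-1}\binom{\alpha-1}{p-1-k}\frac{(-X)^k}{k!}$, where $\binom{x}{m}=x(x-1)\cdots(x-m+1)/m!$. For integers $0<r,s<p$ (interpreted as elements of $\mathbb F_p$), $b_{r,s}(\alpha)=\sum_{k=0}^{p-1}(-r/s)^k\binom{r\alpha-1}{p-1-k}\binom{s\alpha-1}{k}\in\mathbb F_p[\alpha]$. *)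

theory Defs
  imports "HOL-Computational_Algebra.Polynomial" "HOL-Computational_Algebra.Fraction_Field" "HOL-Library.Cardinality"
begin

definition gbin :: "'b::field \<Rightarrow> nat \<Rightarrow> 'b" where
  "gbin x m = (\<Prod>i<m. x - of_nat i) / of_nat (fact m)"

definition alpha :: "'a::field poly fract" where
  "alpha = Fract [:0, 1:] 1"

text \<open>L_{p-1}^{(a)}(X) = sum_{k=0}^{p-1} binom(a-1, p-1-k) (-X)^k / k!, as a polynomial in X
  with the parameter a specialised to an element of the field.\<close>
definition lag_poly :: "nat \<Rightarrow> 'b::field \<Rightarrow> 'b poly" where
  "lag_poly p a = (\<Sum>k<p. monom (gbin (a - 1) (p - 1 - k) * (-1) ^ k / of_nat (fact k)) k)"

definition bcoef :: "nat \<Rightarrow> nat \<Rightarrow> nat \<Rightarrow> 'b::field \<Rightarrow> 'b" where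
  "bcoef p r s a = (\<Sum>k<p. (- (of_nat r / of_nat s)) ^ k
       * gbin (of_nat r * a - 1) (p - 1 - k) * gbin (of_nat s * a - 1) k)"

definition Gpoly :: "nat \<Rightarrow> 'b::field \<Rightarrow> 'b poly" where
  "Gpoly p a = - (\<Sum>k\<in>{1..p-1}. monom ((1 / of_nat k) / (\<Prod>s\<in>{1..k-1}. bcoef p 1 s a)) k)"

end

theory Submission
  imports Defs "HOL-Number_Theory.Cong" "HOL-Computational_Algebra.Primes"
begin


lemma ofnat_zero_iff:
  assumes "CHAR('k::field) = p"
  shows "(of_nat n = (0::'k)) \<longleftrightarrow> p dvd n"
  using assms by (simp add: of_nat_eq_0_iff_char_dvd)

lemma frob_add:
  assumes "CHAR('k::field) = p" "prime p"
  shows "(x + y :: 'k) ^ p = x ^ p + y ^ p"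
  using assms by (intro freshmans_dream) auto

lemma frob_neg:
  assumes "odd p"
  shows "(- x :: 'k::field) ^ p = - (x ^ p)"
  using assms by (simp add: power_minus_odd)

lemma frob_diff:
  assumes "CHAR('k::field) = p" "prime p" "odd p"
  shows "(x - y :: 'k) ^ p = x ^ p - y ^ p"
  using frob_add[OF assms(1,2), of x "-y"] frob_neg[OF assms(3), of y] by simp

lemma frob_ofnat:
  assumes "CHAR('k::field) = p" "prime p"
  shows "(of_nat n :: 'k) ^ p = of_nat n"
proof (induction n)
  case 0 then show ?case using assms prime_gt_0_nat by (simp add: power_0_left)
next
  case (Suc n)
  have "(of_nat (Suc n) :: 'k) ^ p = (of_nat n + 1) ^ p" by (simp add: add.commute)
  also have "\<dots> = of_nat n ^ p + 1" using frob_add[OF assms, of "of_nat n" 1] by simp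
  finally show ?case using Suc by simp
qed

lemma ofnat_inj:
  assumes "CHAR('k::field) = p" "i < p" "j < p" "(of_nat i :: 'k) = of_nat j"
  shows "i = j"
proof -
  have "[i = j] (mod p)" using assms of_nat_eq_iff_cong_CHAR[where 'a='k] by metis
  then show ?thesis using assms(2,3) by (simp add: cong_def)
qed

lemma ofnat_pow_pm1:
  assumes "CHAR('k::field) = p" "prime p" "\<not> p dvd n"
  shows "(of_nat n :: 'k) ^ (p - 1) = 1"
proof -
  have nz: "(of_nat n :: 'k) \<noteq> 0" using assms ofnat_zero_iff by blast
  have "(of_nat n :: 'k) * of_nat n ^ (p - 1) = of_nat n ^ p"
    using assms(2) prime_gt_0_nat by (metis Suc_diff_1 power_Suc)
  also have "\<dots> = of_nat n * 1" using frob_ofnat[OF assms(1,2)] by simp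
  finally show ?thesis using nz by (metis mult_left_cancel)
qed

lemma prod_lin_eq:
  assumes "CHAR('k::field) = p" "prime p"
  shows "(\<Prod>j\<in>{1..p-1}. (x::'k) - of_nat j) = x ^ (p - 1) - 1"
proof -
  define P :: "'k poly" where "P = (\<Prod>j\<in>{1..p-1}. [:- of_nat j, 1:])"
  define Q :: "'k poly" where "Q = monom 1 (p - 1) - 1"
  have p2: "p \<ge> 2" using assms(2) prime_ge_2_nat by blast
  have degP: "degree P = p - 1" unfolding P_def
    by (subst degree_prod_eq_sum_degree) auto
  have lcP: "coeff P (p - 1) = 1"
  proof -
    have "coeff P (p - 1) = lead_coeff P" using degP by simp
    also have "\<dots> = 1" unfolding P_def by (simp add: lead_coeff_prod)
    finally show ?thesis .
  qed
  have degQ: "degree Q \<le> p - 1" unfolding Q_def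
    by (metis degree_diff_le degree_monom_le degree_1 le0)
  have lcQ: "coeff Q (p - 1) = 1" unfolding Q_def using p2 by (simp add: coeff_monom)
  define A :: "'k set" where "A = of_nat ` {1..p-1}"
  have injA: "inj_on (of_nat :: nat \<Rightarrow> 'k) {1..p-1}"
    by (rule inj_onI) (use ofnat_inj[OF assms(1)] p2 in auto)
  have cardA: "card A = p - 1" unfolding A_def using card_image[OF injA] by simp
  have "P = Q"
  proof (rule poly_eqI_degree_lead_coeff[of P "p - 1" Q A])
    show "coeff P (p - 1) = coeff Q (p - 1)" using lcP lcQ by simp
    show "p - 1 \<le> card A" using cardA by simp
    show "degree P \<le> p - 1" using degP by simp
    show "degree Q \<le> p - 1" by (rule degQ)
    fix z assume "z \<in> A"
    then obtain j where j: "j \<in> {1..p-1}" "z = of_nat j" unfolding A_def by blast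
    have "poly P z = 0" unfolding P_def poly_prod using j by (auto intro: prod_zero)
    moreover have "poly Q z = 0"
    proof -
      have "\<not> p dvd j" using j p2 by (auto dest: dvd_imp_le)
      then have "z ^ (p - 1) = 1" using ofnat_pow_pm1[OF assms] j by simp
      then show ?thesis unfolding Q_def by (simp add: poly_monom)
    qed
    ultimately show "poly P z = poly Q z" by simp
  qed
  then have "poly P x = poly Q x" by simp
  then show ?thesis unfolding P_def Q_def by (simp add: poly_prod poly_monom)
qed

lemma wilson_k:
  assumes "CHAR('k::field) = p" "prime p" "odd p"
  shows "(of_nat (fact (p - 1)) :: 'k) = -1"
proof -
  have h1: "(\<Prod>j\<in>{1..p-1}. (0::'k) - of_nat j) = 0 ^ (p - 1) - 1" by (rule prod_lin_eq[OF assms(1,2)])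
  have h2: "(0::'k) ^ (p - 1) = 0" using prime_ge_2_nat[OF assms(2)] by (simp add: power_0_left)
  have h3: "(\<Prod>j\<in>{1..p-1}. (0::'k) - of_nat j) = (-1) ^ (p - 1) * (\<Prod>j\<in>{1..p-1}. of_nat j)"
    by (simp add: prod_uminus)
  have h4: "((-1)::'k) ^ (p - 1) = 1" using assms(3) by simp
  have h5: "(of_nat (fact (p - 1)) :: 'k) = (\<Prod>j\<in>{1..p-1}. of_nat j)"
    by (simp add: fact_prod of_nat_prod)
  have "(\<Prod>j\<in>{1..p-1}. (0::'k) - of_nat j) = -1" using h1 h2 by simp
  moreover have "(\<Prod>j\<in>{1..p-1}. (0::'k) - of_nat j) = (\<Prod>j\<in>{1..p-1}. of_nat j)" using h3 h4 by simp
  ultimately show ?thesis using h5 by simp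
qed

lemma gbin_pm1:
  assumes "CHAR('k::field) = p" "prime p" "odd p"
  shows "gbin ((x::'k) - 1) (p - 1) = 1 - x ^ (p - 1)"
proof -
  have "(\<Prod>i<p-1. x - 1 - of_nat i) = (\<Prod>j\<in>{1..p-1}. x - of_nat j)"
    by (rule prod.reindex_bij_witness[of _ "\<lambda>j. j - 1" Suc]) (auto simp: algebra_simps)
  then show ?thesis unfolding gbin_def using prod_lin_eq[OF assms(1,2), of x] wilson_k[OF assms]
    by (simp add: field_simps)
qed

lemma gbin_pm1':
  assumes "CHAR('k::field) = p" "prime p" "odd p"
  shows "(x::'k) * gbin (x - 1) (p - 1) = x - x ^ p"
proof -
  have "x * x ^ (p - 1) = x ^ p" using assms(2) prime_gt_0_nat by (metis Suc_diff_1 power_Suc)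
  then show ?thesis using gbin_pm1[OF assms, of x] by (simp add: algebra_simps) (metis add_diff_cancel_left' diff_add_cancel mult.right_neutral right_diff_distrib')
qed

lemma ofnat_sub:
  assumes "CHAR('k::field) = p" "k \<le> p"
  shows "(of_nat (p - k) :: 'k) = - of_nat k"
proof -
  have "(of_nat (p - k) :: 'k) + of_nat k = of_nat p" using assms(2) by (simp flip: of_nat_add)
  also have "\<dots> = 0" using assms(1) by (metis of_nat_CHAR)
  finally show ?thesis by (simp add: eq_neg_iff_add_eq_0)
qed

lemma fact_nz:
  assumes "CHAR('k::field) = p" "prime p" "k < p"
  shows "(of_nat (fact k) :: 'k) \<noteq> 0"
  using assms ofnat_zero_iff[OF assms(1)] prime_dvd_fact_iff[OF assms(2)] by auto

lemma ofnat_nz: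
  assumes "CHAR('k::field) = p" "0 < k" "k < p"
  shows "(of_nat k :: 'k) \<noteq> 0"
  using assms ofnat_zero_iff[OF assms(1)] by (auto dest: dvd_imp_le)

lemma gbin_Suc: "gbin x (Suc m) = gbin x m * (x - of_nat m) / of_nat (Suc m)"
proof -
  have "gbin x (Suc m) = ((\<Prod>i<m. x - of_nat i) * (x - of_nat m)) / (of_nat (Suc m) * of_nat (fact m))"
    unfolding gbin_def by (simp only: prod.lessThan_Suc fact_Suc of_nat_mult of_nat_id)
  also have "\<dots> = gbin x m * (x - of_nat m) / of_nat (Suc m)"
    unfolding gbin_def by (simp add: divide_divide_eq_left times_divide_eq_left mult.commute)
  finally show ?thesis .
qed

definition Mp :: "nat \<Rightarrow> 'k::field \<Rightarrow> 'k \<Rightarrow> 'k poly" where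
  "Mp p b r = (\<Sum>k<p. monom (gbin (b - 1) (p - 1 - k) * (-r) ^ k / of_nat (fact k)) k)"

lemma coeff_Mp: "coeff (Mp p b r) n = (if n < p then gbin (b - 1) (p - 1 - n) * (-r) ^ n / of_nat (fact n) else 0)"
  unfolding Mp_def by (simp add: coeff_sum coeff_monom)

lemma lag_Mp: "lag_poly p a = Mp p a 1"
  unfolding lag_poly_def Mp_def by simp

lemma degree_Mp: "p > 0 \<Longrightarrow> degree (Mp p b r) \<le> p - 1"
  by (rule degree_le) (auto simp: coeff_Mp)

lemma Mp_ode:
  assumes "CHAR('k::field) = p" "prime p" "odd p"
  shows "pCons 0 (pderiv (Mp p (b::'k) r)) = [:-b, r:] * Mp p b r + monom (r ^ p) p + [:b - b ^ p:]"
proof (rule poly_eqI)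
  fix n
  have p2: "p \<ge> 2" using prime_ge_2_nat[OF assms(2)] .
  let ?N = "Mp p b r"
  have split: "[:-b, r:] * ?N = smult (-b) ?N + pCons 0 (smult r ?N)"
    by (simp add: algebra_simps)
  show "coeff (pCons 0 (pderiv ?N)) n = coeff ([:-b, r:] * ?N + monom (r ^ p) p + [:b - b ^ p:]) n"
  proof (cases n)
    case 0
    have "b * gbin (b - 1) (p - 1) = b - b ^ p" using gbin_pm1'[OF assms, of b] by simp
    then show ?thesis using 0 p2 by (simp add: split coeff_Mp coeff_monom)
  next
    case (Suc k)
    show ?thesis
    proof (cases "Suc k < p")
      case True
      have kp: "k < p" using True by simp
      have nz1: "(of_nat (Suc k) :: 'k) \<noteq> 0" using ofnat_nz[OF assms(1), of "Suc k"] True by (simp del: of_nat_Suc)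
      have nz2: "(of_nat (fact k) :: 'k) \<noteq> 0" using fact_nz[OF assms(1,2) kp] .
      have e1: "p - 1 - k = Suc (p - 1 - Suc k)" using True by simp
      have e2: "(of_nat (p - 1 - Suc k) :: 'k) = - of_nat (Suc (Suc k))"
        using ofnat_sub[OF assms(1), of "Suc (Suc k)"] True by (simp add: diff_diff_add)
      have e3: "(of_nat (Suc (p - 1 - Suc k)) :: 'k) = - of_nat (Suc k)"
        using ofnat_sub[OF assms(1), of "Suc k"] True by (metis Suc_diff_Suc diff_Suc_1 diff_diff_left less_imp_le_nat plus_1_eq_Suc)
      have g: "gbin (b - 1) (p - 1 - k) = gbin (b - 1) (p - 1 - Suc k) * (b + of_nat (Suc k)) / (- of_nat (Suc k))"
        unfolding e1 gbin_Suc e2 e3 by (simp add: algebra_simps)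
      define G0 where "G0 = gbin (b - 1) (p - 1 - k)"
      define G1 where "G1 = gbin (b - 1) (p - 1 - Suc k)"
      define K where "K = (of_nat (Suc k) :: 'k)"
      define F where "F = (of_nat (fact k) :: 'k)"
      define R where "R = (-r) ^ k"
      have c1: "coeff ?N (Suc k) = G1 * ((-r) * R) / (K * F)"
        unfolding coeff_Mp G1_def K_def F_def R_def using True
        by (simp only: if_True power_Suc fact_Suc of_nat_mult of_nat_id)
      have c0: "coeff ?N k = G0 * R / F" unfolding coeff_Mp G0_def R_def F_def using kp by simp
      have gg: "G0 = - G1 * (b + K) / K" unfolding G0_def G1_def K_def using g by (simp del: of_nat_Suc add: divide_minus_right)
      have "K * coeff ?N (Suc k) = - b * coeff ?N (Suc k) + r * coeff ?N k"
        unfolding c1 c0 gg using nz1 nz2 unfolding K_def[symmetric] F_def[symmetric]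
        by (simp add: field_simps)
      then have "of_nat (Suc k) * coeff ?N (Suc k) = - b * coeff ?N (Suc k) + r * coeff ?N k"
        unfolding K_def .
      then show ?thesis using Suc True by (simp add: split coeff_pderiv coeff_monom)
    next
      case False
      show ?thesis
      proof (cases "Suc k = p")
        case True
        have "r * coeff ?N k + r ^ p = 0"
        proof -
          have "k = p - 1" using True by simp
          then have "coeff ?N k = (-r) ^ (p - 1) / of_nat (fact (p - 1))" using p2 by (simp add: coeff_Mp gbin_def)
          also have "\<dots> = - (r ^ (p - 1))" using wilson_k[OF assms] assms(3) p2 by (simp add: power_minus_even)
          finally have "r * coeff ?N k = - (r * r ^ (p - 1))" by simp
          moreover have "r * r ^ (p - 1) = r ^ p"
          proof -
            have "Suc (p - 1) = p" using p2 by simp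
            then show ?thesis by (metis power_Suc)
          qed
          ultimately show ?thesis by simp
        qed
        moreover have z: "coeff ?N (Suc k) = 0" using True by (simp add: coeff_Mp)
        moreover have m: "coeff (monom (r ^ p) p) (Suc k) = r ^ p" using True by simp
        ultimately show ?thesis using Suc by (simp add: split coeff_pderiv)
      next
        case False
        then show ?thesis using Suc \<open>\<not> Suc k < p\<close> by (simp add: split coeff_pderiv coeff_monom coeff_Mp)
      qed
    qed
  qed
qed

definition mmod :: "nat \<Rightarrow> 'k::field \<Rightarrow> 'k poly" where
  "mmod p a = monom 1 p - [:a ^ p - a:]"

lemma pderiv_mmod:
  assumes "CHAR('k::field) = p"
  shows "pderiv (mmod p (a::'k)) = 0"
proof -
  have "(of_nat p :: 'k) = 0" using assms by (metis of_nat_CHAR)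
  then show ?thesis unfolding mmod_def by (simp add: pderiv_diff pderiv_monom pderiv_pCons)
qed

lemma degree_mmod:
  assumes "p > 0"
  shows "degree (mmod p (a::'k::field)) = p"
proof -
  have "monom 1 p - [:a ^ p - a:] = monom 1 p + [:-(a ^ p - a):]" by simp
  also have "degree \<dots> = p" using assms by (subst degree_add_eq_left) (auto simp: degree_monom_eq)
  finally show ?thesis unfolding mmod_def .
qed

lemma M_ode:
  assumes "CHAR('k::field) = p" "prime p" "odd p"
  shows "pCons 0 (pderiv (Mp p (of_nat r * a) (of_nat r))) =
     [:-(of_nat r * a), of_nat r:] * Mp p (of_nat r * a) (of_nat r) + smult (of_nat r) (mmod p (a::'k))"
proof -
  have fr: "(of_nat r :: 'k) ^ p = of_nat r" by (rule frob_ofnat[OF assms(1,2)])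
  have "monom ((of_nat r :: 'k) ^ p) p + [:of_nat r * a - (of_nat r * a) ^ p:] = smult (of_nat r) (mmod p a)"
    unfolding mmod_def fr power_mult_distrib by (simp add: smult_monom smult_diff_right algebra_simps)
  then show ?thesis using Mp_ode[OF assms, of "of_nat r * a" "of_nat r"] by (simp add: add.assoc)
qed

lemma ode_unique:
  assumes "CHAR('k::field) = p" "prime p" "(c::'k) \<noteq> 0" "degree y < p" "coeff y (p - 1) = 0"
    and dv: "mmod p a dvd (pCons 0 (pderiv y) - [:d, c:] * y)"
  shows "y = 0"
proof -
  have p2: "p \<ge> 2" using prime_ge_2_nat[OF assms(2)] .
  define z where "z = pCons 0 (pderiv y) - [:d, c:] * y"
  have cz: "coeff z (Suc j) = of_nat (Suc j) * coeff y (Suc j) - (d * coeff y (Suc j) + c * coeff y j)" for j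
    unfolding z_def by (simp add: coeff_pderiv)
  have yp: "coeff y p = 0" using assms(4) by (simp add: coeff_eq_0)
  have "z = 0"
  proof (rule ccontr)
    assume nz: "z \<noteq> 0"
    have "degree z \<le> p"
    proof (rule degree_le, intro allI impI)
      fix i assume "p < i"
      then obtain j where j: "i = Suc j" "p \<le> j" by (cases i) auto
      then show "coeff z i = 0" unfolding j cz using assms(4) by (simp add: coeff_eq_0)
    qed
    moreover have "coeff z p = 0"
    proof -
      obtain j where j: "p = Suc j" using p2 by (cases p) auto
      show ?thesis using cz[of j] yp assms(5) j by simp
    qed
    ultimately have "degree z < p" using nz by (metis le_neq_implies_less leading_coeff_0_iff)
    moreover have "degree (mmod p a) \<le> degree z" using dv nz unfolding z_def by (intro dvd_imp_degree_le) auto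
    ultimately show False using degree_mmod[of p a] p2 by simp
  qed
  then have rec: "c * coeff y j = (of_nat (Suc j) - d) * coeff y (Suc j)" for j
    using cz[of j] by (simp add: algebra_simps)
  have down: "i < p \<Longrightarrow> coeff y (p - 1 - i) = 0" for i
  proof (induction i)
    case 0 then show ?case using assms(5) by simp
  next
    case (Suc i)
    have "Suc (p - 1 - Suc i) = p - 1 - i" using Suc.prems by simp
    then have "c * coeff y (p - 1 - Suc i) = 0" using rec[of "p - 1 - Suc i"] Suc by simp
    then show ?case using assms(3) by simp
  qed
  show ?thesis
  proof (rule poly_eqI)
    fix n show "coeff y n = coeff 0 n"
    proof (cases "n < p")
      case True
      then have "n = p - 1 - (p - 1 - n)" by simp
      have "p - 1 - (p - 1 - n) = n" using True by simp
      then show ?thesis using down[of "p - 1 - n"] True p2 by simp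
    next
      case False then show ?thesis using assms(4) by (simp add: coeff_eq_0)
    qed
  qed
qed

lemma ode_mod:
  assumes "CHAR('k::field) = p"
    and dv: "mmod p (a::'k) dvd (pCons 0 (pderiv F) - [:d, c:] * F)"
  shows "mmod p a dvd (pCons 0 (pderiv (F mod mmod p a)) - [:d, c:] * (F mod mmod p a))"
proof -
  define m where "m = mmod p a"
  define q where "q = F div m"
  define F0 where "F0 = F mod m"
  have F: "F = q * m + F0" unfolding q_def F0_def by simp
  have "pderiv F = m * pderiv q + pderiv F0" unfolding F using pderiv_mmod[OF assms(1)]
    by (simp add: pderiv_add pderiv_mult m_def)
  then have "pCons 0 (pderiv F) - [:d, c:] * F =
       m * (pCons 0 (pderiv q) - [:d, c:] * q) + (pCons 0 (pderiv F0) - [:d, c:] * F0)"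
    unfolding F by (simp add: algebra_simps smult_add_right)
  then show ?thesis using dv unfolding m_def[symmetric] F0_def[symmetric]
    by (metis dvd_add_right_iff dvd_triv_left)
qed

lemma factpair:
  assumes "CHAR('k::field) = p" "prime p" "odd p" "i < p"
  shows "(of_nat (fact i) :: 'k) * of_nat (fact (p - 1 - i)) = - ((-1) ^ i)"
  using assms(4)
proof (induction i)
  case 0 then show ?case using wilson_k[OF assms(1-3)] by simp
next
  case (Suc i)
  have e: "p - 1 - i = Suc (p - 1 - Suc i)" using Suc.prems by simp
  have e2: "(of_nat (Suc (p - 1 - Suc i)) :: 'k) = - of_nat (Suc i)"
    using ofnat_sub[OF assms(1), of "Suc i"] Suc.prems by (metis e Suc_diff_Suc diff_Suc_1 diff_diff_left less_imp_le_nat plus_1_eq_Suc)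
  have "(of_nat (fact i) :: 'k) * of_nat (fact (p - 1 - i)) = - ((of_nat (fact (Suc i)) :: 'k) * of_nat (fact (p - 1 - Suc i)))"
    unfolding e fact_Suc of_nat_mult of_nat_id e2 fact_Suc by (simp add: algebra_simps)
  then show ?case using Suc by simp
qed

lemma degree_mod_mmod:
  assumes "p > 0"
  shows "degree (x mod mmod p (a::'k::field)) < p"
proof -
  have "mmod p a \<noteq> 0" using degree_mmod[OF assms, of a] assms by auto
  then show ?thesis using degree_mod_less[of "mmod p a" x] degree_mmod[OF assms, of a] assms by auto
qed

lemma coeff_mod_mmod:
  assumes "p \<ge> 2" "degree F \<le> 2 * p - 2"
  shows "coeff (F mod mmod p (a::'k::field)) (p - 1) = coeff F (p - 1)"
proof -
  define m where "m = mmod p a"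
  define q where "q = F div m"
  define F0 where "F0 = F mod m"
  have F: "F = q * m + F0" unfolding q_def F0_def by simp
  have p0: "p > 0" using assms(1) by simp
  have dm: "degree m = p" unfolding m_def by (rule degree_mmod[OF p0])
  have dF0: "degree F0 < p" unfolding F0_def m_def by (rule degree_mod_mmod[OF p0])
  have "coeff (q * m) (p - 1) = 0"
  proof (cases "q = 0")
    case True then show ?thesis by simp
  next
    case False
    have "m \<noteq> 0" using dm assms by auto
    then have "degree (q * m) = degree q + p" using False dm by (simp add: degree_mult_eq)
    moreover have "degree (q * m) \<le> 2 * p - 2"
    proof -
      have "q * m = F - F0" using F by simp
      then have "degree (q * m) \<le> max (degree F) (degree F0)" by (metis degree_diff_le_max)
      then show ?thesis using assms dF0 by simp
    qed
    ultimately have dq: "degree q \<le> p - 2" by simp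
    have "coeff q (p - 1) = 0" using dq assms by (intro coeff_eq_0) simp
    moreover have "coeff (q * monom 1 p) (p - 1) = 0" using assms
      by (simp add: mult.commute[of q] coeff_monom_mult)
    ultimately show ?thesis unfolding m_def mmod_def by (simp add: algebra_simps)
  qed
  then show ?thesis unfolding F0_def[symmetric] m_def[symmetric] using F by simp
qed

abbreviation MM :: "nat \<Rightarrow> 'k::field \<Rightarrow> nat \<Rightarrow> 'k poly" where
  "MM p a r \<equiv> Mp p (of_nat r * a) (of_nat r)"

lemma coeff_top_M:
  assumes "CHAR('k::field) = p" "prime p" "odd p" "\<not> p dvd r"
  shows "coeff (MM p (a::'k) r) (p - 1) = -1"
proof -
  have p2: "p \<ge> 2" using prime_ge_2_nat[OF assms(2)] .
  have "(-(of_nat r :: 'k)) ^ (p - 1) = 1" using ofnat_pow_pm1[OF assms(1,2,4)] assms(3) by (simp add: power_minus_even)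
  then show ?thesis using p2 wilson_k[OF assms(1-3)] by (simp add: coeff_Mp gbin_def)
qed

lemma alg2: "(e::'k::field) \<noteq> 0 \<Longrightarrow> X = Z \<Longrightarrow> A * B * e * X / (- e) = - (Z * A * B)"
  by (simp add: field_simps)

lemma coeff_prod_top:
  assumes "CHAR('k::field) = p" "prime p" "odd p" "0 < s" "s < p"
  shows "coeff (Mp p a 1 * MM p (a::'k) s) (p - 1) = - bcoef p 1 s a"
proof -
  have p2: "p \<ge> 2" using prime_ge_2_nat[OF assms(2)] .
  have snz: "(of_nat s :: 'k) \<noteq> 0" using ofnat_nz[OF assms(1,4,5)] .
  have "\<not> p dvd s" using assms(4,5) by (auto dest: dvd_imp_le)
  then have spow: "(of_nat s :: 'k) ^ (p - 1) = 1" using ofnat_pow_pm1[OF assms(1,2)] by blast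
  have "coeff (Mp p a 1 * MM p a s) (p - 1) = (\<Sum>i<p. coeff (Mp p a 1) i * coeff (MM p a s) (p - 1 - i))"
  proof -
    have "{..p - 1} = {..<p}" using p2 by auto
    then show ?thesis by (simp only: coeff_mult)
  qed
  also have "\<dots> = (\<Sum>i<p. - ((- (of_nat 1 / of_nat s)) ^ i * gbin (of_nat 1 * a - 1) (p - 1 - i) * gbin (of_nat s * a - 1) i))"
  proof (rule sum.cong[OF refl])
    fix i assume "i \<in> {..<p}"
    then have ip: "i < p" by simp
    have fp: "(of_nat (fact i) :: 'k) * of_nat (fact (p - 1 - i)) = - ((-1) ^ i)" by (rule factpair[OF assms(1-3) ip])
    have ps: "(- (of_nat s :: 'k)) ^ (p - 1 - i) * (- of_nat s) ^ i = 1"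
      using spow assms(3) ip by (simp add: power_add[symmetric] power_minus_even)
    have e: "p - 1 - (p - 1 - i) = i" using ip by simp
    have "coeff (Mp p a 1) i * coeff (MM p a s) (p - 1 - i) =
        gbin (a - 1) (p - 1 - i) * gbin (of_nat s * a - 1) i * (-1) ^ i * (- of_nat s) ^ (p - 1 - i)
          / (of_nat (fact i) * of_nat (fact (p - 1 - i)))"
      unfolding coeff_Mp e using ip by simp
    also have "\<dots> = - ((- (1 / of_nat s)) ^ i * gbin (a - 1) (p - 1 - i) * gbin (of_nat s * a - 1) i)"
    proof -
      have "(- (of_nat s :: 'k)) ^ (p - 1 - i) = (- (1 / of_nat s)) ^ i"
      proof -
        have Yn: "(- (of_nat s::'k)) ^ i \<noteq> 0" using snz by simp
        have "(- (of_nat s :: 'k)) ^ (p - 1 - i) = 1 / (- of_nat s) ^ i" using ps Yn by (simp add: eq_divide_eq)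
        also have "\<dots> = (1 / (- of_nat s)) ^ i" by (rule power_one_over[symmetric])
        also have "\<dots> = (- (1 / of_nat s)) ^ i" by (simp only: minus_divide_right)
        finally show ?thesis .
      qed
      moreover have "((-1)::'k) ^ i \<noteq> 0" by simp
      ultimately show ?thesis unfolding fp using alg2 by metis
    qed
    finally show "coeff (Mp p a 1) i * coeff (MM p a s) (p - 1 - i) =
       - ((- (of_nat 1 / of_nat s)) ^ i * gbin (of_nat 1 * a - 1) (p - 1 - i) * gbin (of_nat s * a - 1) i)" by simp
  qed
  also have "\<dots> = - bcoef p 1 s a" unfolding bcoef_def by (simp add: sum_negf)
  finally show ?thesis .
qed

lemma ring_id3: "(x::'a::comm_ring) * (A * y + u) + y * (B * x + w) - (A + B) * (x * y) = x * u + y * w"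
  by (simp add: algebra_simps)

lemma prod_step:
  assumes "CHAR('k::field) = p" "prime p" "odd p" "0 < s" "Suc s < p"
  shows "(Mp p a 1 * MM p (a::'k) s) mod mmod p a = smult (bcoef p 1 s a) (MM p a (Suc s))"
proof -
  have p2: "p \<ge> 2" using prime_ge_2_nat[OF assms(2)] .
  define m where "m = mmod p a"
  define M1 where "M1 = Mp p a 1"
  define Ms where "Ms = MM p a s"
  define H where "H = MM p a (Suc s)"
  define F where "F = M1 * Ms"
  define c where "c = (of_nat (Suc s) :: 'k)"
  define d where "d = - (of_nat (Suc s) * a)"
  define lam where "lam = bcoef p 1 s a"
  have ode1: "pCons 0 (pderiv M1) = [:-a, 1:] * M1 + m"
    using M_ode[OF assms(1-3), of 1 a] unfolding M1_def m_def by simp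
  have odeS: "pCons 0 (pderiv Ms) = [:-(of_nat s * a), of_nat s:] * Ms + smult (of_nat s) m"
    using M_ode[OF assms(1-3), of s a] unfolding Ms_def m_def by simp
  have odeH: "pCons 0 (pderiv H) - [:d, c:] * H = smult c m"
    using M_ode[OF assms(1-3), of "Suc s" a] unfolding H_def m_def c_def d_def by simp
  have dF: "pCons 0 (pderiv F) = M1 * pCons 0 (pderiv Ms) + Ms * pCons 0 (pderiv M1)"
    unfolding F_def by (simp add: pderiv_mult)
  have lin: "[:-(of_nat s * a), of_nat s:] + [:-a, 1:] = [:d, c:]"
    unfolding c_def d_def by (simp add: algebra_simps)
  have "pCons 0 (pderiv F) - [:d, c:] * F = M1 * smult (of_nat s) m + Ms * m"
    unfolding dF unfolding ode1 odeS unfolding lin[symmetric] unfolding F_def by (rule ring_id3)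
  then have hF: "m dvd pCons 0 (pderiv F) - [:d, c:] * F"
    by (simp add: dvd_add dvd_smult)
  define F0 where "F0 = F mod m"
  have hF0: "m dvd pCons 0 (pderiv F0) - [:d, c:] * F0"
    using ode_mod[OF assms(1), of a F d c] hF unfolding F0_def m_def by simp
  define y where "y = F0 - smult lam H"
  have ey: "pCons 0 (pderiv y) - [:d, c:] * y =
      (pCons 0 (pderiv F0) - [:d, c:] * F0) - smult lam (pCons 0 (pderiv H) - [:d, c:] * H)"
    unfolding y_def by (rule poly_eqI) (simp add: coeff_pCons pderiv_diff pderiv_smult algebra_simps split: nat.split)
  have hy: "mmod p a dvd pCons 0 (pderiv y) - [:d, c:] * y"
    unfolding ey odeH m_def[symmetric] by (rule dvd_diff[OF hF0]) (intro dvd_smult dvd_refl)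
  have degF: "degree F \<le> 2 * p - 2"
  proof -
    have "degree F \<le> degree M1 + degree Ms" unfolding F_def by (rule degree_mult_le)
    also have "\<dots> \<le> (p - 1) + (p - 1)" unfolding M1_def Ms_def using p2 by (intro add_mono degree_Mp) auto
    finally show ?thesis by simp
  qed
  have cF: "coeff F (p - 1) = - lam"
    unfolding F_def M1_def Ms_def lam_def by (rule coeff_prod_top[OF assms(1-4)]) (use assms in simp)
  have cH: "coeff H (p - 1) = -1"
    unfolding H_def by (rule coeff_top_M[OF assms(1-3)]) (use assms in \<open>auto dest: dvd_imp_le\<close>)
  have cy: "coeff y (p - 1) = 0"
    unfolding y_def F0_def m_def using coeff_mod_mmod[OF p2 degF, of a] cF cH by simp
  have dy: "degree y < p"
  proof -
    have "degree F0 < p" unfolding F0_def m_def using p2 by (intro degree_mod_mmod) simp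
    moreover have "degree (smult lam H) < p"
    proof -
      have "degree H \<le> p - 1" unfolding H_def using p2 by (intro degree_Mp) simp
      then show ?thesis using degree_smult_le[of lam H] p2 by linarith
    qed
    ultimately show ?thesis unfolding y_def by (rule degree_diff_less)
  qed
  have cnz: "c \<noteq> 0" unfolding c_def using ofnat_nz[OF assms(1), of "Suc s"] assms(5) by (simp del: of_nat_Suc)
  have "y = 0" by (rule ode_unique[OF assms(1,2) cnz dy cy hy])
  then show ?thesis unfolding y_def F0_def F_def m_def M1_def Ms_def H_def lam_def by simp
qed

lemma pcompose_monom': "pcompose (monom c n) q = smult c (q ^ n)"
  by (induction n) (simp_all add: monom_0 monom_Suc pcompose_pCons algebra_simps)

lemma pow_step:
  assumes "CHAR('k::field) = p" "prime p" "odd p" "0 < k" "k < p"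
  shows "(Mp p (a::'k) 1) ^ k mod mmod p a = smult (\<Prod>s\<in>{1..k-1}. bcoef p 1 s a) (MM p a k)"
  using assms(4,5)
proof (induction k)
  case 0 then show ?case by simp
next
  case (Suc k)
  have p2: "p \<ge> 2" using prime_ge_2_nat[OF assms(2)] .
  show ?case
  proof (cases "k = 0")
    case True
    have "degree (Mp p a 1) < degree (mmod p a)" using degree_Mp[of p a 1] degree_mmod[of p a] p2 by simp
    then show ?thesis using True by (simp add: mod_poly_less)
  next
    case False
    have IH: "(Mp p a 1) ^ k mod mmod p a = smult (\<Prod>s\<in>{1..k-1}. bcoef p 1 s a) (MM p a k)"
      using Suc False by simp
    have "(Mp p a 1) ^ Suc k mod mmod p a = (Mp p a 1 * ((Mp p a 1) ^ k mod mmod p a)) mod mmod p a"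
      by (simp add: mod_mult_right_eq)
    also have "\<dots> = smult (\<Prod>s\<in>{1..k-1}. bcoef p 1 s a) ((Mp p a 1 * MM p a k) mod mmod p a)"
      unfolding IH by (simp add: mod_smult_left)
    also have "\<dots> = smult ((\<Prod>s\<in>{1..k-1}. bcoef p 1 s a) * bcoef p 1 k a) (MM p a (Suc k))"
      using prod_step[OF assms(1-3), of k a] False Suc.prems by simp
    also have "(\<Prod>s\<in>{1..k-1}. bcoef p 1 s a) * bcoef p 1 k a = (\<Prod>s\<in>{1..Suc k - 1}. bcoef p 1 s a)"
    proof -
      have "{1..Suc k - 1} = insert k {1..k-1}" using False by auto
      moreover have "k \<notin> {1..k-1}" by auto
      ultimately show ?thesis by (simp add: mult.commute)
    qed
    finally show ?thesis .
  qed
qed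

lemma powsum:
  assumes "CHAR('k::field) = p" "prime p" "n \<le> p - 2"
  shows "(\<Sum>k<p. (of_nat k :: 'k) ^ n) = 0"
  using assms(3)
proof (induction n rule: less_induct)
  case (less n)
  have p2: "p \<ge> 2" using prime_ge_2_nat[OF assms(2)] .
  have bin: "(x + 1) ^ Suc n - x ^ Suc n = (\<Sum>i\<le>n. of_nat (Suc n choose i) * x ^ i)" for x :: 'k
    using binomial_ring[of x 1 "Suc n"] by (simp add: atMost_Suc)
  have bin': "(of_nat (Suc k) :: 'k) ^ Suc n - of_nat k ^ Suc n = (\<Sum>i\<le>n. of_nat (Suc n choose i) * of_nat k ^ i)" for k
    using bin[of "of_nat k"] by (simp only: of_nat_Suc add.commute)
  have "(\<Sum>k<p. (of_nat (Suc k) :: 'k) ^ Suc n - (of_nat k) ^ Suc n) = (of_nat p) ^ Suc n - (of_nat 0) ^ Suc n"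
    by (rule sum_lessThan_telescope[where f = "\<lambda>k. (of_nat k :: 'k) ^ Suc n"])
  also have "\<dots> = 0" using assms(1) by (simp add: of_nat_CHAR[where 'a='k, unfolded assms(1)])
  finally have "(\<Sum>k<p. \<Sum>i\<le>n. of_nat (Suc n choose i) * (of_nat k :: 'k) ^ i) = 0"
    by (simp only: bin')
  then have "(\<Sum>i\<le>n. of_nat (Suc n choose i) * (\<Sum>k<p. (of_nat k :: 'k) ^ i)) = 0"
    by (simp add: sum.swap[of _ "{..<p}"] sum_distrib_left)
  moreover have "(\<Sum>i\<le>n. of_nat (Suc n choose i) * (\<Sum>k<p. (of_nat k :: 'k) ^ i)) =
      of_nat (Suc n) * (\<Sum>k<p. (of_nat k :: 'k) ^ n)"
  proof -
    have "(\<Sum>i<n. of_nat (Suc n choose i) * (\<Sum>k<p. (of_nat k :: 'k) ^ i)) = 0"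
      using less by (intro sum.neutral) auto
    then show ?thesis by (simp add: lessThan_Suc_atMost[symmetric])
  qed
  ultimately have "of_nat (Suc n) * (\<Sum>k<p. (of_nat k :: 'k) ^ n) = 0" by simp
  moreover have "(of_nat (Suc n) :: 'k) \<noteq> 0" using ofnat_nz[OF assms(1), of "Suc n"] less.prems p2 by linarith
  ultimately show ?case by simp
qed

lemma gbin_m1:
  assumes "CHAR('k::field) = p" "prime p" "m < p"
  shows "gbin (-1 :: 'k) m = (-1) ^ m"
proof -
  have "(\<Prod>i<m. (-1::'k) - of_nat i) = (-1) ^ m * (\<Prod>i<m. of_nat (Suc i))"
    by (induction m) (simp_all add: algebra_simps)
  moreover have "(\<Prod>i<m. (of_nat (Suc i) :: 'k)) = of_nat (fact m)"
    by (simp add: fact_prod_Suc of_nat_prod atLeast0LessThan)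
  ultimately show ?thesis unfolding gbin_def using fact_nz[OF assms] by simp
qed

lemma polysum:
  assumes "CHAR('k::field) = p" "prime p" "degree P \<le> p - 2"
  shows "(\<Sum>k<p. poly P (of_nat k :: 'k)) = 0"
proof -
  have "(\<Sum>k<p. poly P (of_nat k :: 'k)) = (\<Sum>k<p. \<Sum>i\<le>degree P. coeff P i * of_nat k ^ i)"
    by (simp add: poly_altdef)
  also have "\<dots> = (\<Sum>i\<le>degree P. coeff P i * (\<Sum>k<p. (of_nat k :: 'k) ^ i))"
    by (simp add: sum.swap[of _ "{..<p}"] sum_distrib_left)
  also have "\<dots> = 0" using assms by (intro sum.neutral) (auto intro!: powsum)
  finally show ?thesis .
qed

lemma ndvd1: "1 \<le> k \<Longrightarrow> k \<le> p - 1 \<Longrightarrow> 0 < p \<Longrightarrow> \<not> p dvd (k::nat)"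
proof
  assume "1 \<le> k" "k \<le> p - 1" "0 < p" "p dvd k"
  then have "p \<le> k" by (intro dvd_imp_le) auto
  then show False using \<open>k \<le> p - 1\<close> \<open>0 < p\<close> by linarith
qed

lemma sum_shift1:
  assumes "(p::nat) > 0"
  shows "(\<Sum>k<p. f k) = f 0 + (\<Sum>k\<in>{1..p-1}. f k)"
proof -
  obtain q where q: "p = Suc q" using assms by (cases p) auto
  have "{..<p} = {0..q}" unfolding q by auto
  then have "(\<Sum>k<p. f k) = (\<Sum>k\<in>{0..q}. f k)" by simp
  also have "\<dots> = f 0 + (\<Sum>k\<in>{Suc 0..q}. f k)" by (rule sum.atLeast_Suc_atMost) simp
  finally show ?thesis unfolding q by simp
qed

lemma alg3: "(x::'k::field) \<noteq> 0 \<Longrightarrow> 1 / x * (G * (s * (x * y)) / f) = s / f * (y * G)"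
  by (simp add: field_simps)

lemma sum_M:
  assumes "CHAR('k::field) = p" "prime p" "odd p"
  shows "(\<Sum>k\<in>{1..p-1}. smult (1 / of_nat k) (MM p (a::'k) k)) = - [:0, 1:]"
proof (rule poly_eqI)
  fix j
  have p2: "p \<ge> 2" using prime_ge_2_nat[OF assms(2)] .
  have p3: "p \<ge> 3" using p2 assms(3) by presburger
  have knz: "k \<in> {1..p-1} \<Longrightarrow> (of_nat k :: 'k) \<noteq> 0" for k
    by (rule ofnat_nz[OF assms(1)]) (use p2 in auto)
  have kpow: "k \<in> {1..p-1} \<Longrightarrow> (of_nat k :: 'k) ^ (p - 1) = 1" for k
    using ofnat_pow_pm1[OF assms(1,2), of k] ndvd1[of k p] p2 by auto
  have lhs: "coeff (\<Sum>k\<in>{1..p-1}. smult (1 / of_nat k) (MM p a k)) j =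
      (\<Sum>k\<in>{1..p-1}. 1 / of_nat k * coeff (MM p a k) j)"
    by (simp add: coeff_sum)
  show "coeff (\<Sum>k\<in>{1..p-1}. smult (1 / of_nat k) (MM p a k)) j = coeff (- [:0, 1:]) j"
  proof (cases "j < p")
    case False
    then show ?thesis unfolding lhs using p2 by (simp add: coeff_Mp coeff_pCons split: nat.split)
  next
    case jp: True
    show ?thesis
    proof (cases "j = 0")
      case True
      have inv: "k \<in> {1..p-1} \<Longrightarrow> 1 / (of_nat k :: 'k) = of_nat k ^ (p - 2)" for k
      proof -
        assume k: "k \<in> {1..p-1}"
        have "(of_nat k :: 'k) * of_nat k ^ (p - 2) = of_nat k ^ (p - 1)"
        proof -
          have "Suc (p - 2) = p - 1" using p3 by simp
          then show ?thesis by (metis power_Suc)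
        qed
        then show ?thesis using kpow[OF k] knz[OF k] by (simp add: field_simps)
      qed
      have "(\<Sum>k\<in>{1..p-1}. 1 / of_nat k * coeff (MM p a k) j) = (\<Sum>k\<in>{1..p-1}. (of_nat k :: 'k) ^ (p - 2) * (1 - a ^ (p - 1)))"
      proof (rule sum.cong[OF refl])
        fix k assume k: "k \<in> {1..p-1}"
        have "coeff (MM p a k) j = 1 - (of_nat k * a) ^ (p - 1)"
          using True p2 gbin_pm1[OF assms, of "of_nat k * a"] by (simp add: coeff_Mp)
        also have "\<dots> = 1 - a ^ (p - 1)" using kpow[OF k] by (simp add: power_mult_distrib)
        finally show "1 / of_nat k * coeff (MM p a k) j = (of_nat k :: 'k) ^ (p - 2) * (1 - a ^ (p - 1))"
          using inv[OF k] by simp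
      qed
      also have "\<dots> = (\<Sum>k\<in>{1..p-1}. (of_nat k :: 'k) ^ (p - 2)) * (1 - a ^ (p - 1))"
        by (simp add: sum_distrib_right)
      also have "(\<Sum>k\<in>{1..p-1}. (of_nat k :: 'k) ^ (p - 2)) = 0"
      proof -
        have "(\<Sum>k<p. (of_nat k :: 'k) ^ (p - 2)) = 0" by (rule powsum[OF assms(1,2)]) simp
        then show ?thesis using sum_shift1[of p "\<lambda>k. (of_nat k :: 'k) ^ (p - 2)"] p3 by (simp add: power_0_left)
      qed
      finally show ?thesis unfolding lhs using True by simp
    next
      case False
      define m where "m = p - 1 - j"
      define Pj :: "'k poly" where "Pj = monom 1 (j - 1) * smult (1 / of_nat (fact m)) (\<Prod>i<m. [:-1 - of_nat i, a:])"
      have polyPj: "poly Pj x = x ^ (j - 1) * gbin (x * a - 1) m" for x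
        unfolding Pj_def gbin_def by (simp add: poly_monom poly_prod algebra_simps)
      have degPj: "degree Pj \<le> p - 2"
      proof -
        have "degree Pj \<le> degree (monom (1::'k) (j - 1)) + degree (smult (1 / of_nat (fact m)) (\<Prod>i<m. [:-1 - of_nat i, a:]))"
          unfolding Pj_def by (rule degree_mult_le)
        also have "\<dots> \<le> (j - 1) + m"
        proof (intro add_mono)
          show "degree (monom (1::'k) (j - 1)) \<le> j - 1" by (simp add: degree_monom_le)
          have "degree (\<Prod>i<m. [:-1 - of_nat i, a:]) \<le> (\<Sum>i<m. degree [:-1 - of_nat i, (a::'k):])"
            by (rule degree_prod_sum_le[unfolded o_def]) simp
          also have "\<dots> \<le> (\<Sum>i<m. 1)" by (intro sum_mono) simp
          finally have "degree (\<Prod>i<m. [:-1 - of_nat i, a:]) \<le> m" by simp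
          then show "degree (smult (1 / of_nat (fact m)) (\<Prod>i<m. [:-1 - of_nat i, a:])) \<le> m"
            using degree_smult_le le_trans by blast
        qed
        also have "\<dots> = p - 2" unfolding m_def using False jp by simp
        finally show ?thesis .
      qed
      have trm: "k \<in> {1..p-1} \<Longrightarrow> 1 / of_nat k * coeff (MM p a k) j = (-1) ^ j / of_nat (fact j) * poly Pj (of_nat k)" for k
      proof -
        assume k: "k \<in> {1..p-1}"
        have e1: "(of_nat k :: 'k) ^ j = of_nat k * of_nat k ^ (j - 1)" using False by (cases j) auto
        have e: "(- (of_nat k :: 'k)) ^ j = (-1) ^ j * (of_nat k * of_nat k ^ (j - 1))"
          unfolding e1[symmetric] by (rule power_minus)
        have "1 / of_nat k * coeff (MM p a k) j = 1 / of_nat k * (gbin (of_nat k * a - 1) m * ((-1) ^ j * (of_nat k * of_nat k ^ (j - 1))) / of_nat (fact j))"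
          using jp unfolding m_def by (simp add: coeff_Mp e)
        also have "\<dots> = (-1) ^ j / of_nat (fact j) * (of_nat k ^ (j - 1) * gbin (of_nat k * a - 1) m)"
          by (rule alg3[OF knz[OF k]])
        finally show ?thesis unfolding polyPj .
      qed
      have "(\<Sum>k\<in>{1..p-1}. 1 / of_nat k * coeff (MM p a k) j) = (\<Sum>k\<in>{1..p-1}. (-1) ^ j / of_nat (fact j) * poly Pj (of_nat k))"
        by (rule sum.cong[OF refl]) (rule trm)
      also have "\<dots> = (-1) ^ j / of_nat (fact j) * (\<Sum>k\<in>{1..p-1}. poly Pj (of_nat k))"
        by (rule sum_distrib_left[symmetric])
      also have "(\<Sum>k\<in>{1..p-1}. poly Pj (of_nat k)) = - poly Pj 0"
        using polysum[OF assms(1,2) degPj] sum_shift1[of p "\<lambda>k. poly Pj (of_nat k)"] p2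
        by (simp add: eq_neg_iff_add_eq_0 add.commute)
      finally have eq: "(\<Sum>k\<in>{1..p-1}. 1 / of_nat k * coeff (MM p a k) j) = (-1) ^ j / of_nat (fact j) * (- poly Pj 0)" .
      show ?thesis
      proof (cases "j = 1")
        case True
        have "m = p - 2" unfolding m_def True by simp
        then have "poly Pj 0 = (-1) ^ (p - 2)" unfolding polyPj using True gbin_m1[OF assms(1,2), of "p - 2"] p2 by simp
        also have "\<dots> = -1"
        proof -
          have "odd (p - 2)" using assms(3) p3 by presburger
          then show ?thesis by simp
        qed
        finally show ?thesis unfolding lhs eq using True by simp
      next
        case j1: False
        then have "poly Pj 0 = 0" unfolding polyPj using False by (simp add: power_0_left)
        then show ?thesis unfolding lhs eq using j1 False by (simp add: coeff_pCons split: nat.split)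
      qed
    qed
  qed
qed

lemma poly_mod_sum: "(sum f A) mod (m::'k::field poly) = sum (\<lambda>i. f i mod m) A"
  by (induction A rule: infinite_finite_induct) (simp_all add: poly_mod_add_left)

lemma GL:
  assumes "CHAR('k::field) = p" "prime p" "odd p"
    and hb: "\<And>s. s \<in> {1..p-2} \<Longrightarrow> bcoef p 1 s (a::'k) \<noteq> 0"
  shows "pcompose (Gpoly p a) (Mp p a 1) mod mmod p a = [:0, 1:]"
proof -
  have p2: "p \<ge> 2" using prime_ge_2_nat[OF assms(2)] .
  define g where "g k = (1 / of_nat k) / (\<Prod>s\<in>{1..k-1}. bcoef p 1 s a)" for k
  define mu where "mu k = (\<Prod>s\<in>{1..k-1}. bcoef p 1 s a)" for k
  have "pcompose (Gpoly p a) (Mp p a 1) = - (\<Sum>k\<in>{1..p-1}. smult (g k) (Mp p a 1 ^ k))"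
    unfolding Gpoly_def g_def by (simp add: pcompose_uminus pcompose_sum pcompose_monom')
  then have "pcompose (Gpoly p a) (Mp p a 1) mod mmod p a = - (\<Sum>k\<in>{1..p-1}. smult (g k) (Mp p a 1 ^ k mod mmod p a))"
    by (simp add: poly_mod_sum mod_smult_left)
  also have "\<dots> = - (\<Sum>k\<in>{1..p-1}. smult (1 / of_nat k) (MM p a k))"
  proof -
    have "smult (g k) (Mp p a 1 ^ k mod mmod p a) = smult (1 / of_nat k) (MM p a k)" if k: "k \<in> {1..p-1}" for k
    proof -
      have "mu k \<noteq> 0" unfolding mu_def using k hb by (auto simp: prod_zero_iff)
      moreover have "Mp p a 1 ^ k mod mmod p a = smult (mu k) (MM p a k)"
        unfolding mu_def using k p2 by (intro pow_step[OF assms(1-3)]) auto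
      ultimately show ?thesis unfolding g_def mu_def[symmetric] by simp
    qed
    then show ?thesis by (intro arg_cong[where f = uminus] sum.cong) auto
  qed
  also have "\<dots> = [:0, 1:]" using sum_M[OF assms(1-3), of a] by simp
  finally show ?thesis .
qed

lemma dvd_pow_diff: "(x - y) dvd (x ^ n - y ^ n :: 'a::comm_ring_1)"
proof (induction n)
  case 0 then show ?case by simp
next
  case (Suc n)
  have "x ^ Suc n - y ^ Suc n = x * (x ^ n - y ^ n) + (x - y) * y ^ n" by (simp add: algebra_simps)
  then show ?case using Suc by (metis dvd_add dvd_mult dvd_triv_left)
qed

lemma gbin_frob:
  assumes "CHAR('k::field) = p" "prime p" "odd p"
  shows "gbin (x::'k) m ^ p = gbin (x ^ p) m"
  unfolding gbin_def power_divide prod_power_distrib frob_ofnat[OF assms(1,2)]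
  by (simp add: frob_diff[OF assms] frob_ofnat[OF assms(1,2)])

lemma frob_L:
  assumes "CHAR('k::field) = p" "prime p" "odd p"
  shows "mmod p a dvd (Mp p (a::'k) 1) ^ p - [: poly (lag_poly p (a ^ p)) (a ^ p - a) :]"
proof -
  have cp: "CHAR('k poly) = p" using assms(1) by simp
  define l where "l k = gbin (a - 1) (p - 1 - k) * (-1) ^ k / of_nat (fact k)" for k
  define l' where "l' k = gbin (a ^ p - 1) (p - 1 - k) * (-1) ^ k / of_nat (fact k)" for k
  have ll: "l k ^ p = l' k" for k
  proof -
    have "((-1::'k) ^ k) ^ p = ((-1) ^ p) ^ k" by (simp add: power_mult[symmetric] mult.commute)
    also have "(-1::'k) ^ p = -1" using assms(3) by simp
    finally have "((-1::'k) ^ k) ^ p = (-1) ^ k" .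
    then show ?thesis unfolding l_def l'_def power_divide power_mult_distrib gbin_frob[OF assms]
      frob_diff[OF assms] frob_ofnat[OF assms(1,2)] by simp
  qed
  have L: "Mp p a 1 = (\<Sum>k<p. monom (l k) k)" unfolding Mp_def l_def by simp
  have "(Mp p a 1) ^ p = (\<Sum>k<p. monom (l k) k ^ p)"
    unfolding L by (rule freshmans_dream_sum) (use cp assms(2) in auto)
  also have "\<dots> = (\<Sum>k<p. monom (l' k) (k * p))" by (simp add: monom_power ll)
  finally have Lp: "(Mp p a 1) ^ p = (\<Sum>k<p. monom (l' k) (k * p))" .
  have c: "poly (lag_poly p (a ^ p)) (a ^ p - a) = (\<Sum>k<p. l' k * (a ^ p - a) ^ k)"
    unfolding lag_poly_def l'_def by (simp add: poly_sum poly_monom)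
  have "(Mp p a 1) ^ p - [: poly (lag_poly p (a ^ p)) (a ^ p - a) :] =
      (\<Sum>k<p. smult (l' k) ((monom 1 p) ^ k - [: a ^ p - a :] ^ k))"
  proof -
    have "(\<Sum>k<p. smult (l' k) ((monom 1 p) ^ k - [: a ^ p - a :] ^ k)) =
        (\<Sum>k<p. monom (l' k) (k * p) - [: l' k * (a ^ p - a) ^ k :])"
      by (rule sum.cong[OF refl]) (simp add: monom_power poly_const_pow smult_diff_right smult_monom mult.commute)
    also have "\<dots> = (\<Sum>k<p. monom (l' k) (k * p)) - [: \<Sum>k<p. l' k * (a ^ p - a) ^ k :]"
      by (simp add: sum_subtractf sum_to_poly)
    finally show ?thesis unfolding Lp c by simp
  qed
  also have "mmod p a dvd \<dots>"
    by (intro dvd_sum dvd_smult) (unfold mmod_def, rule dvd_pow_diff)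
  finally show ?thesis .
qed

interpretation pvs: vector_space "smult :: 'a::field \<Rightarrow> 'a poly \<Rightarrow> 'a poly"
  by unfold_locales (simp_all add: smult_add_right smult_add_left)

lemma pcompose_cong_dvd:
  fixes f g :: "'k::field poly"
  assumes "m dvd f - g"
  shows "m dvd pcompose h f - pcompose h g"
proof (induction h)
  case 0 then show ?case by simp
next
  case (pCons c h)
  have "pcompose (pCons c h) f - pcompose (pCons c h) g = f * (pcompose h f - pcompose h g) + (f - g) * pcompose h g"
    by (simp add: pcompose_pCons algebra_simps)
  then show ?case using pCons assms by (metis dvd_add dvd_mult dvd_mult2)
qed

lemma pc_X: "pcompose [:0, 1:] (q::'a::comm_ring_1 poly) = q"
  by (simp add: pcompose_pCons smult_one)

lemma smult_sum_right: "smult c (sum f A) = sum (\<lambda>i. smult c (f i)) A"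
  by (induction A rule: infinite_finite_induct) (simp_all add: smult_add_right)

lemma pcompose_power_left': "pcompose (f ^ n) q = (pcompose f q) ^ n"
  by (induction n) (simp_all add: pcompose_mult pcompose_1)

lemma pcompose_as_sum: "pcompose f q = (\<Sum>j\<le>degree f. smult (coeff f j) (q ^ j))"
proof -
  have "pcompose f q = pcompose (\<Sum>j\<le>degree f. monom (coeff f j) j) q" by (simp add: poly_as_sum_of_monoms)
  also have "\<dots> = (\<Sum>j\<le>degree f. smult (coeff f j) (q ^ j))" by (simp add: pcompose_sum pcompose_monom')
  finally show ?thesis .
qed

lemma monoms_independent:
  "pvs.independent ((\<lambda>j. monom (1::'k::field) j) ` {..<p})"
proof
  assume "pvs.dependent ((\<lambda>j. monom (1::'k) j) ` {..<p})"
  then obtain i where i: "i < p" and sp: "monom 1 i \<in> pvs.span ((\<lambda>j. monom (1::'k) j) ` {..<p} - {monom 1 i})"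
    unfolding pvs.dependent_def by auto
  have "coeff x i = 0" if "x \<in> pvs.span ((\<lambda>j. monom (1::'k) j) ` {..<p} - {monom 1 i})" for x
    using that
  proof (induction rule: pvs.span_induct_alt)
    case base then show ?case by simp
  next
    case (step c x y)
    then show ?case by (auto simp: coeff_monom split: if_splits)
  qed
  from this[OF sp] show False by simp
qed

lemma LA:
  fixes L G m :: "'k::field poly"
  assumes p2: "p \<ge> 2" and dm: "degree m = p"
    and hGL: "pcompose G L mod m = [:0, 1:]"
    and hc: "m dvd L ^ p - [:c:]"
  shows "(monom 1 p - [:c:]) dvd (pcompose L G - [:0, 1:])"
proof -
  define n where "n = monom 1 p - [:c:]"
  have dn: "degree n = p"
  proof -
    have "n = monom 1 p + [:-c:]" unfolding n_def by simp
    also have "degree \<dots> = p" using p2 by (subst degree_add_eq_left) (auto simp: degree_monom_eq)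
    finally show ?thesis .
  qed
  have n0: "n \<noteq> 0" using dn p2 by auto
  have m0: "m \<noteq> 0" using dm p2 by auto
  define u where "u = pcompose L G - [:0, 1:]"
  define r where "r = u mod n"
  have X: "[:0, 1:] mod m = ([:0, 1:] :: 'k poly)" using dm p2 by (intro mod_poly_less) simp
  have dGL: "m dvd pcompose G L - [:0, 1:]"
    using hGL X by (metis mod_eq_dvd_iff)
  have hn: "m dvd pcompose n L" unfolding n_def using hc by (simp add: pcompose_diff pcompose_monom')
  have hu: "m dvd pcompose u L"
  proof -
    have "pcompose u L = pcompose L (pcompose G L) - pcompose L [:0, 1:]"
      unfolding u_def by (simp add: pcompose_diff pcompose_assoc pc_X)
    then show ?thesis using pcompose_cong_dvd[OF dGL, of L] by simp
  qed
  have hr: "m dvd pcompose r L"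
  proof -
    have "u = (u div n) * n + r" unfolding r_def by simp
    then have "pcompose u L = pcompose (u div n) L * pcompose n L + pcompose r L"
      by (metis pcompose_add pcompose_mult)
    then show ?thesis using hu hn by (metis dvd_add_right_iff dvd_mult)
  qed
  have "r = 0"
  proof (rule ccontr)
    assume r0: "r \<noteq> 0"
    define d where "d = degree r"
    have dp: "d < p" unfolding d_def r_def using degree_mod_less[OF n0, of u] r0 dn r_def by auto
    define B where "B = (\<lambda>i. L ^ i mod m) ` {..<d}"
    have lc: "coeff r d \<noteq> 0" unfolding d_def using r0 by simp
    have pr: "pcompose r L = (\<Sum>j<d. smult (coeff r j) (L ^ j)) + smult (coeff r d) (L ^ d)"
      unfolding pcompose_as_sum[of r L] d_def[symmetric] by (simp add: lessThan_Suc_atMost[symmetric])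
    have Li: "L ^ i mod m \<in> pvs.span B" for i
    proof (induction i rule: less_induct)
      case (less i)
      show ?case
      proof (cases "i < d")
        case True then show ?thesis unfolding B_def by (intro pvs.span_base) auto
      next
        case False
        define e where "e = i - d"
        have ie: "i = e + d" unfolding e_def using False by simp
        have Ld: "L ^ d = smult (1 / coeff r d) (pcompose r L) - (\<Sum>j<d. smult (coeff r j / coeff r d) (L ^ j))"
        proof -
          have "smult (1 / coeff r d) (pcompose r L) = smult (1 / coeff r d) (\<Sum>j<d. smult (coeff r j) (L ^ j)) + L ^ d"
            unfolding pr using lc by (simp add: smult_add_right)
          then show ?thesis by (simp add: smult_sum_right algebra_simps)
        qed
        have "L ^ i = smult (1 / coeff r d) (L ^ e * pcompose r L) - (\<Sum>j<d. smult (coeff r j / coeff r d) (L ^ (e + j)))"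
          unfolding ie power_add Ld by (simp add: algebra_simps sum_distrib_left mult_smult_right)
        then have "L ^ i mod m = smult (1 / coeff r d) ((L ^ e * pcompose r L) mod m) - (\<Sum>j<d. smult (coeff r j / coeff r d) (L ^ (e + j) mod m))"
          by (simp add: poly_mod_diff_left poly_mod_sum mod_smult_left)
        also have "(L ^ e * pcompose r L) mod m = 0" using hr by (simp add: mod_eq_0_iff_dvd dvd_mult)
        finally have eq: "L ^ i mod m = - (\<Sum>j<d. smult (coeff r j / coeff r d) (L ^ (e + j) mod m))" by simp
        show ?thesis unfolding eq
          by (intro pvs.span_neg pvs.span_sum pvs.span_scale less) (use ie in auto)
      qed
    qed
    have Lf: "pcompose f L mod m \<in> pvs.span B" for f
      unfolding pcompose_as_sum[of f L] by (simp add: poly_mod_sum mod_smult_left pvs.span_sum pvs.span_scale Li)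
    have sub: "(\<lambda>j. monom (1::'k) j) ` {..<p} \<subseteq> pvs.span B"
    proof
      fix x assume "x \<in> (\<lambda>j. monom (1::'k) j) ` {..<p}"
      then obtain j where j: "j < p" "x = monom 1 j" by auto
      have "monom (1::'k) j = [:0, 1:] ^ j" by (simp add: monom_altdef)
      also have "\<dots> = [:0, 1:] ^ j mod m" using j dm by (intro mod_poly_less[symmetric]) (simp add: degree_linear_power)
      also have "\<dots> = (pcompose G L mod m) ^ j mod m" using hGL by simp
      also have "\<dots> = pcompose (G ^ j) L mod m" by (simp add: power_mod pcompose_power_left')
      finally show "x \<in> pvs.span B" using j Lf by simp
    qed
    have "finite ((\<lambda>j. monom (1::'k) j) ` {..<p}) \<and> card ((\<lambda>j. monom (1::'k) j) ` {..<p}) \<le> card B"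
      by (rule pvs.independent_span_bound[OF _ monoms_independent sub]) (simp add: B_def)
    moreover have "card ((\<lambda>j. monom (1::'k) j) ` {..<p}) = p"
      by (subst card_image) (auto simp: inj_on_def monom_eq_iff')
    moreover have "card B \<le> d" unfolding B_def by (metis card_image_le card_lessThan finite_lessThan)
    ultimately show False using dp by simp
  qed
  then show ?thesis unfolding r_def u_def n_def by (simp add: mod_eq_0_iff_dvd)
qed

lemma char_card:
  assumes "CARD('a::{field,finite}) = p" "prime p"
  shows "CHAR('a) = p"
proof -
  define q where "q = CHAR('a)"
  have q0: "q > 0" unfolding q_def by (rule finite_imp_CHAR_pos) simp
  have qp: "prime q" unfolding q_def using q0 q_def prime_CHAR_semidom by blast
  define Orb where "Orb x = (\<lambda>k. x + of_nat k) ` {..<q}" for x :: 'a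
  have modr: "(of_nat k :: 'a) = of_nat (k mod q)" for k
    unfolding q_def by (simp add: of_nat_eq_iff_cong_CHAR[where 'a='a] cong_def)
  have Oall: "Orb x = {x + of_nat k | k. True}" for x
  proof
    show "Orb x \<subseteq> {x + of_nat k | k. True}" unfolding Orb_def by auto
    show "{x + of_nat k | k. True} \<subseteq> Orb x" unfolding Orb_def using q0 modr
      by (auto intro!: image_eqI[where x = "_ mod q"])
  qed
  have negn: "- (of_nat b :: 'a) = of_nat ((q - 1) * b)" for b
  proof -
    have "(of_nat ((q - 1) * b) :: 'a) + of_nat b = of_nat (q * b)" using q0
      by (simp flip: of_nat_add add: algebra_simps)
    also have "\<dots> = 0" unfolding q_def by simp
    finally have "(of_nat ((q - 1) * b) :: 'a) + of_nat b = 0" .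
    then show ?thesis by (metis add_eq_0_iff2 add.commute)
  qed
  have sub: "y \<in> Orb x \<Longrightarrow> Orb y \<subseteq> Orb x" for x y
  proof -
    assume "y \<in> Orb x"
    then obtain a where a: "y = x + of_nat a" unfolding Oall by auto
    show "Orb y \<subseteq> Orb x" unfolding Oall a by (auto simp: add.assoc simp flip: of_nat_add)
  qed
  have self: "x \<in> Orb x" for x unfolding Orb_def using q0 by (auto intro!: image_eqI[where x = 0])
  have disj: "Orb x \<noteq> Orb y \<Longrightarrow> Orb x \<inter> Orb y = {}" for x y
  proof (rule ccontr)
    assume ne: "Orb x \<noteq> Orb y" and "Orb x \<inter> Orb y \<noteq> {}"
    then obtain z where "z \<in> Orb x" "z \<in> Orb y" by auto
    then have "Orb z \<subseteq> Orb x" "Orb z \<subseteq> Orb y" using sub by auto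
    moreover have "x \<in> Orb z"
    proof -
      obtain a where a: "z = x + of_nat a" using \<open>z \<in> Orb x\<close> unfolding Oall by auto
      have "x = z + of_nat ((q - 1) * a)" unfolding a negn[symmetric] by simp
      then show ?thesis unfolding Oall by blast
    qed
    moreover have "y \<in> Orb z"
    proof -
      obtain a where a: "z = y + of_nat a" using \<open>z \<in> Orb y\<close> unfolding Oall by auto
      have "y = z + of_nat ((q - 1) * a)" unfolding a negn[symmetric] by simp
      then show ?thesis unfolding Oall by blast
    qed
    ultimately have "Orb x = Orb z" "Orb y = Orb z" using sub by blast+
    then show False using ne by simp
  qed
  have cardO: "card (Orb x) = q" for x
  proof -
    have "inj_on (\<lambda>k. x + (of_nat k :: 'a)) {..<q}"
    proof (rule inj_onI)
      fix i j assume "i \<in> {..<q}" "j \<in> {..<q}" "x + (of_nat i :: 'a) = x + of_nat j"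
      then show "i = j" using ofnat_inj[of q i j] unfolding q_def by auto
    qed
    then show ?thesis unfolding Orb_def by (simp add: card_image)
  qed
  have "q * card (range Orb) = card (\<Union>(range Orb))"
  proof (rule card_partition)
    show "finite (range Orb)" by simp
    show "finite (\<Union>(range Orb))" by simp
    show "c \<in> range Orb \<Longrightarrow> card c = q" for c using cardO by auto
    show "c1 \<in> range Orb \<Longrightarrow> c2 \<in> range Orb \<Longrightarrow> c1 \<noteq> c2 \<Longrightarrow> c1 \<inter> c2 = {}" for c1 c2
      using disj by blast
  qed
  moreover have "\<Union>(range Orb) = UNIV" using self by auto
  ultimately have "q dvd p" using assms(1) by (metis dvd_triv_left)
  then have "q = p" using assms(2) qp by (metis prime_nat_iff prime_gt_1_nat less_irrefl)
  then show ?thesis unfolding q_def .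
qed

lemma char_fract:
  assumes "CHAR('a::field) = p"
  shows "CHAR('a poly fract) = p"
proof (rule CHAR_eqI)
  show "of_nat p = (0 :: 'a poly fract)"
  proof -
    have "(of_nat p :: 'a poly) = 0" using assms by (simp add: of_nat_eq_0_iff_char_dvd)
    then show ?thesis unfolding of_nat_fract by (simp add: fract_collapse)
  qed
  fix x assume "of_nat x = (0 :: 'a poly fract)"
  then have "Fract (of_nat x) 1 = Fract (0::'a poly) 1" unfolding of_nat_fract by (simp add: fract_collapse)
  then have "(of_nat x :: 'a poly) = 0" by (simp add: eq_fract)
  then show "p dvd x" using assms by (simp add: of_nat_eq_0_iff_char_dvd)
qed



definition GP :: "nat \<Rightarrow> 'a::field poly \<Rightarrow> 'a poly" where
  "GP m X = smult (inverse (of_nat (fact m))) (\<Prod>i<m. X - of_nat i)"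

lemma Fract_prod: "(\<Prod>i\<in>A. Fract (f i) (1::'a::idom)) = Fract (\<Prod>i\<in>A. f i) 1"
  by (induction A rule: infinite_finite_induct) (simp_all add: fract_collapse)

lemma Fract_sum: "(\<Sum>i\<in>A. Fract (f i) (1::'a::idom)) = Fract (\<Sum>i\<in>A. f i) 1"
  by (induction A rule: infinite_finite_induct) (simp_all add: fract_collapse)

lemma gbin_Fract:
  assumes "(of_nat (fact m) :: 'a::field) \<noteq> 0"
  shows "gbin (Fract X 1) m = Fract (GP m X) (1::'a poly)"
proof -
  have "(\<Prod>i<m. Fract X 1 - (of_nat i :: 'a poly fract)) = Fract (\<Prod>i<m. X - of_nat i) 1"
    unfolding of_nat_fract by (simp add: Fract_prod)
  moreover have "Fract (\<Prod>i<m. X - of_nat i) 1 / (of_nat (fact m) :: 'a poly fract) = Fract (GP m X) 1"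
  proof -
    have "(of_nat (fact m) :: 'a poly) = [:of_nat (fact m):]" by (simp add: of_nat_poly)
    moreover have "[:of_nat (fact m) :: 'a:] \<noteq> 0" using assms by simp
    ultimately show ?thesis unfolding of_nat_fract GP_def using assms
      by (simp add: eq_fract)
  qed
  ultimately show ?thesis unfolding gbin_def by simp
qed

lemma Fract_const_inverse:
  "Fract [:inverse c:] (1::'a::field poly) = inverse (Fract [:c:] 1)"
  by (cases "c = 0") (simp_all add: eq_fract fract_collapse)

lemma Fract_const_mult: "Fract [:a:] 1 * Fract [:b:] 1 = Fract [:a * b:] (1::'a::field poly)"
  by (simp add: mult.commute)

lemma Fract_const_power: "Fract [:c ^ k:] (1::'a::field poly) = (Fract [:c:] 1) ^ k"
proof (induction k)
  case 0 then show ?case by (simp add: fract_collapse one_pCons[symmetric])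
next
  case (Suc k) then show ?case by (simp add: Fract_const_mult[symmetric])
qed

lemma Fract_const_neg: "Fract [:- c:] (1::'a::field poly) = - Fract [:c:] 1"
  by simp

lemma Fract_smult: "Fract (smult c X) (1::'a::field poly) = Fract [:c:] 1 * Fract X 1"
  by simp

lemma bcoef_alpha:
  assumes "CHAR('a::field) = p" "prime p" "0 < s" "s < p"
  shows "bcoef p 1 s (alpha :: 'a poly fract) =
    Fract (\<Sum>k<p. smult ((- (of_nat 1 / of_nat s)) ^ k)
       (GP (p - 1 - k) (of_nat 1 * [:0, 1:] - 1) * GP k (of_nat s * [:0, 1:] - 1))) 1"
proof -
  have fnz: "k < p \<Longrightarrow> (of_nat (fact k) :: 'a) \<noteq> 0" for k using fact_nz[OF assms(1,2)] .
  have snz: "(of_nat s :: 'a) \<noteq> 0" using ofnat_nz[OF assms(1,3,4)] .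
  have c: "(- (of_nat 1 / of_nat s)) ^ k = Fract [:(- (of_nat 1 / of_nat s :: 'a)) ^ k:] (1::'a poly)" for k
  proof -
    have es: "(of_nat s :: 'a poly fract) = Fract [:of_nat s:] 1" by (simp only: of_nat_fract of_nat_poly)
    have "(- (of_nat 1 / of_nat s :: 'a poly fract)) ^ k = (- inverse (of_nat s :: 'a poly fract)) ^ k"
      by (simp add: divide_inverse)
    also have "\<dots> = (- inverse (Fract [:of_nat s:] 1)) ^ k" by (simp only: es)
    also have "inverse (Fract [:of_nat s:] (1::'a poly)) = Fract [:inverse (of_nat s):] 1"
      by (rule Fract_const_inverse[symmetric])
    also have "- Fract [:inverse (of_nat s :: 'a):] (1::'a poly) = Fract [:- inverse (of_nat s):] 1"
      by (rule Fract_const_neg[symmetric])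
    also have "(Fract [:- inverse (of_nat s :: 'a):] (1::'a poly)) ^ k = Fract [:(- inverse (of_nat s)) ^ k:] 1"
      by (rule Fract_const_power[symmetric])
    also have "(- inverse (of_nat s :: 'a)) = - (of_nat 1 / of_nat s)" by (simp add: divide_inverse)
    finally show ?thesis .
  qed
  have x1: "of_nat 1 * alpha - 1 = Fract (of_nat 1 * [:0, 1:] - 1) (1::'a poly)"
    unfolding alpha_def by (simp add: fract_collapse[symmetric])
  have xs: "of_nat s * alpha - 1 = Fract (of_nat s * [:0, 1:] - 1) (1::'a poly)"
    unfolding alpha_def of_nat_fract by (simp add: fract_collapse[symmetric])
  have "bcoef p 1 s (alpha :: 'a poly fract) = (\<Sum>k<p. Fract (smult ((- (of_nat 1 / of_nat s)) ^ k)
       (GP (p - 1 - k) (of_nat 1 * [:0, 1:] - 1) * GP k (of_nat s * [:0, 1:] - 1))) 1)"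
    unfolding bcoef_def x1 xs
  proof (rule sum.cong[OF refl])
    fix k assume "k \<in> {..<p}"
    then have k: "k < p" by simp
    show "(- (of_nat 1 / of_nat s :: 'a poly fract)) ^ k * gbin (Fract (of_nat 1 * [:0, 1:] - 1) 1) (p - 1 - k) *
          gbin (Fract (of_nat s * [:0, 1:] - 1) 1) k =
        Fract (smult ((- (of_nat 1 / of_nat s)) ^ k)
          (GP (p - 1 - k) (of_nat 1 * [:0, 1:] - 1) * GP k (of_nat s * [:0, 1:] - 1))) 1"
    proof -
      have k2: "p - 1 - k < p" using k by simp
      have e1: "(- (of_nat 1 / of_nat s :: 'a poly fract)) ^ k = Fract [:(- (of_nat 1 / of_nat s :: 'a)) ^ k:] 1"
        by (rule c)
      have e2: "gbin (Fract (of_nat 1 * [:0, 1:] - 1) 1) (p - 1 - k) = Fract (GP (p - 1 - k) (of_nat 1 * [:0, 1:] - 1)) (1::'a poly)"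
        by (rule gbin_Fract[OF fnz[OF k2]])
      have e3: "gbin (Fract (of_nat s * [:0, 1:] - 1) 1) k = Fract (GP k (of_nat s * [:0, 1:] - 1)) (1::'a poly)"
        by (rule gbin_Fract[OF fnz[OF k]])
      show ?thesis unfolding e1 e2 e3
        by (simp only: Fract_smult mult_fract mult_1 mult.assoc)
    qed
  qed
  then show ?thesis by (simp only: Fract_sum)
qed

lemma poly_GP0: "poly (GP m X) 0 = gbin (poly X 0) m"
  unfolding GP_def gbin_def by (simp add: poly_prod divide_inverse mult.commute)

lemma bcoef_alpha_nz:
  assumes "CHAR('a::field) = p" "prime p" "odd p" "0 < s" "Suc s < p"
  shows "bcoef p 1 s (alpha :: 'a poly fract) \<noteq> 0"
proof -
  have sp: "s < p" using assms(5) by simp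
  define q where "q = (- (of_nat 1 / of_nat s) :: 'a)"
  define Q where "Q = (\<Sum>k<p. smult ((- (of_nat 1 / of_nat s)) ^ k)
       (GP (p - 1 - k) (of_nat 1 * [:0, 1:] - 1) * GP k (of_nat s * [:0, 1:] - 1 :: 'a poly)))"
  have snz: "(of_nat s :: 'a) \<noteq> 0" using ofnat_nz[OF assms(1,4) sp] .
  have "poly Q 0 = (\<Sum>k<p. q ^ k)"
    unfolding Q_def q_def poly_sum
  proof (rule sum.cong[OF refl])
    fix k assume "k \<in> {..<p}"
    then have k: "k < p" by simp
    have e: "(-1 :: 'a) ^ (p - 1 - k) * (-1) ^ k = 1"
    proof -
      have "(-1 :: 'a) ^ (p - 1 - k) * (-1) ^ k = (-1) ^ (p - 1)" using k by (simp flip: power_add)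
      also have "\<dots> = 1" using assms(3) by simp
      finally show ?thesis .
    qed
    show "poly (smult ((- (of_nat 1 / of_nat s)) ^ k) (GP (p - 1 - k) (of_nat 1 * [:0, 1:] - 1) * GP k (of_nat s * [:0, 1:] - 1))) 0
        = (- (of_nat 1 / of_nat s :: 'a)) ^ k"
      using gbin_m1[OF assms(1,2), of "p - 1 - k"] gbin_m1[OF assms(1,2) k] k e
      by (simp add: poly_GP0 mult.assoc)
  qed
  also have "\<dots> = 1"
  proof -
    have q1: "q \<noteq> 1"
    proof
      assume "q = 1"
      then have "(of_nat s :: 'a) = -1" unfolding q_def using snz by (simp add: field_simps)
      then have "(of_nat (Suc s) :: 'a) = 0" by simp
      then show False using ofnat_nz[OF assms(1), of "Suc s"] assms(5) by (simp del: of_nat_Suc)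
    qed
    have qp: "q ^ p = q"
    proof -
      have "q ^ p = - ((1 / of_nat s) ^ p)" unfolding q_def using frob_neg[OF assms(3)] by simp
      also have "\<dots> = - (1 / of_nat s ^ p)" by (simp only: power_one_over)
      also have "\<dots> = q" unfolding q_def using frob_ofnat[OF assms(1,2), of s] by simp
      finally show ?thesis .
    qed
    show ?thesis using q1 qp by (simp add: sum_gp_strict)
  qed
  finally have "Q \<noteq> 0" by auto
  then show ?thesis unfolding bcoef_alpha[OF assms(1,2,4) sp] Q_def[symmetric] Zero_fract_def
    by (simp add: eq_fract)
qed

lemma main_general:
  assumes "CHAR('k::field) = p" "prime p" "odd p"
    and hb: "\<And>s. s \<in> {1..p-2} \<Longrightarrow> bcoef p 1 s (a::'k) \<noteq> 0"
  shows "(monom 1 p - [: poly (lag_poly p (a ^ p)) (a ^ p - a) :]) dvd (pcompose (lag_poly p a) (Gpoly p a) - [:0, 1:])"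
proof -
  have p2: "p \<ge> 2" using prime_ge_2_nat[OF assms(2)] .
  show ?thesis unfolding lag_Mp[of p a]
  proof (rule LA[OF p2])
    show "degree (mmod p a) = p" using p2 by (intro degree_mmod) simp
    show "pcompose (Gpoly p a) (Mp p a 1) mod mmod p a = [:0, 1:]" by (rule GL[OF assms])
    show "mmod p a dvd Mp p a 1 ^ p - [:poly (lag_poly p (a ^ p)) (a ^ p - a):]"
      by (rule frob_L[OF assms(1-3)])
  qed
qed

theorem corollary3:
  fixes p :: nat
  assumes "prime p" and "odd p" and "CARD('a) = p"
  shows "(monom 1 p - [: poly (lag_poly p ((alpha :: ('a::{field,finite}) poly fract) ^ p)) (alpha ^ p - alpha) :])
           dvd (pcompose (lag_poly p (alpha :: 'a poly fract)) (Gpoly p alpha) - [:0, 1:])"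
proof -
  have c1: "CHAR('a) = p" by (rule char_card[OF assms(3,1)])
  have c2: "CHAR('a poly fract) = p" by (rule char_fract[OF c1])
  show ?thesis
  proof (rule main_general[OF c2 assms(1,2)])
    fix s assume "s \<in> {1..p-2}"
    then have "0 < s" "Suc s < p" using prime_ge_2_nat[OF assms(1)] by auto
    then show "bcoef p 1 s (alpha :: 'a poly fract) \<noteq> 0" by (rule bcoef_alpha_nz[OF c1 assms(1,2)])
  qed
qed

end
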